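(* Let $\alpha\in(0,1)$ and let $a:[0,+\infty)\to\mathbb{R}$ be continuous. Assume that \[ \int_{0}^{+\infty}t|a(t)|\,dt+\sup_{t>0}t^{1-\alpha}\int_{0}^{t}\frac{s|a(s)|}{(t-s)^{1-\alpha}}\,ds<+\infty \] and \[ \frac{1}{\Gamma(\alpha)}\left(\int_{0}^{+\infty}\frac{|a(s)|}{s^{1-\alpha}}\,ds+\chi\right)=k_{3}<1,\qquad \chi=\sup_{t>0}t^{1-\alpha}\int_{0}^{t}\frac{|a(s)|}{(t-s)^{1-\alpha}s^{1-\alpha}}\,ds . \] Then, for any given real numbers $c$ and $b\neq0$, the fractional differential equation \[ {}_{0}D_{t}^{\alpha}\big(t x'(t)-x(t)\big)+a(t)x(t)=0,\qquad t>0, \] has a solution $x\in C^{1}((0,+\infty),\mathbb{R})$ with the asymptotic formula \[ x(t)=[c+O(1)]\,t^{\alpha-1}+bt=bt+O(t^{\alpha-1})\quad\text{as }t\to+\infty . \]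
   Context: $\Gamma$ is Euler's Gamma function. For a function $f\in C((0,+\infty),\mathbb{R})$ with $\lim_{t\searrow 0}t^{1-\alpha}f(t)\in\mathbb{R}$, the Riemann–Liouville derivative of order $\alpha\in(0,1)$ is $({}_{0}D_{t}^{\alpha}f)(t)=\frac{1}{\Gamma(1-\alpha)}\frac{d}{dt}\left[\int_{0}^{t}\frac{f(s)}{(t-s)^{\alpha}}\,ds\right]$, $t>0$. The operator in the equation is the Riemann–Liouville derivative applied to $tx'-x$. (In the paper the constant $c$ is denoted $a$; it is renamed here to avoid a clash with the coefficient $a(t)$.) *)

theory Defs
  imports "HOL-Analysis.Analysis" "HOL-Library.Landau_Symbols"
begin

definition RL_admissible :: "real \<Rightarrow> (real \<Rightarrow> real) \<Rightarrow> bool" where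
  "RL_admissible \<alpha> f \<longleftrightarrow> continuous_on {0<..} f \<and>
     (\<exists>L. ((\<lambda>t. t powr (1 - \<alpha>) * f t) \<longlongrightarrow> L) (at_right 0))"

definition RL_aux_int :: "real \<Rightarrow> (real \<Rightarrow> real) \<Rightarrow> real \<Rightarrow> real" where
  "RL_aux_int \<alpha> f t = (LINT s:{0<..<t}|lborel. f s / (t - s) powr \<alpha>)"

definition has_RL_derivative_at :: "real \<Rightarrow> (real \<Rightarrow> real) \<Rightarrow> real \<Rightarrow> real \<Rightarrow> bool" where
  "has_RL_derivative_at \<alpha> f D t \<longleftrightarrow>
     (\<exists>D'. (RL_aux_int \<alpha> f has_real_derivative D') (at t) \<and> D = D' / Gamma (1 - \<alpha>))"

end

theory Submission
  imports Defs
begin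


lemma ind_affine_Ioo:
  fixes p q v :: real assumes "p < q"
  shows "(indicator {p<..<q} (p + (q-p) * v) :: real) = indicator {0<..<1} v"
proof -
  have c: "q - p > 0" using assms by simp
  have "p + (q-p) * v \<in> {p<..<q} \<longleftrightarrow> v \<in> {0<..<1}"
  proof -
    have "p < p + (q-p) * v \<longleftrightarrow> 0 < v" using c by (simp add: zero_less_mult_iff)
    moreover have "p + (q-p) * v < q \<longleftrightarrow> (q-p) * v < (q-p) * 1" by argo
    moreover have "(q-p) * v < (q-p) * 1 \<longleftrightarrow> v < 1" using c by (rule mult_less_cancel_left_pos)
    ultimately show ?thesis by auto
  qed
  thus ?thesis by (simp add: indicator_def)
qed

lemma subst_Ioo_integrable:
  fixes F :: "real \<Rightarrow> real" assumes "p < q"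
  shows "set_integrable lborel {p<..<q} F \<longleftrightarrow> set_integrable lborel {0<..<1} (\<lambda>v. F (p + (q-p) * v))"
proof -
  have "set_integrable lborel {p<..<q} F \<longleftrightarrow>
     integrable lborel (\<lambda>v. indicator {p<..<q} (p + (q-p) * v) *\<^sub>R F (p + (q-p) * v))"
    unfolding set_integrable_def using assms
    by (subst lborel_integrable_real_affine_iff[symmetric, where c="q-p" and t=p]) auto
  thus ?thesis using ind_affine_Ioo[OF assms] by (simp add: set_integrable_def)
qed

lemma subst_Ioo_integral:
  fixes F :: "real \<Rightarrow> real" assumes "p < q"
  shows "(LINT u:{p<..<q}|lborel. F u) = (q-p) * (LINT v:{0<..<1}|lborel. F (p + (q-p) * v))"
proof -
  have "(LINT u:{p<..<q}|lborel. F u) = \<bar>q-p\<bar> *\<^sub>R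
     (\<integral>v. indicator {p<..<q} (p + (q-p) * v) *\<^sub>R F (p + (q-p) * v) \<partial>lborel)"
    unfolding set_lebesgue_integral_def using assms
    by (subst lborel_integral_real_affine[where c="q-p" and t=p]) auto
  thus ?thesis using ind_affine_Ioo[OF assms] assms by (simp add: set_lebesgue_integral_def)
qed

lemma Beta_Ioo:
  fixes p q :: real assumes "p > 0" "q > 0"
  shows "set_integrable lborel {0<..<1} (\<lambda>v. v powr (p-1) * (1-v) powr (q-1))"
    and "(LINT v:{0<..<1}|lborel. v powr (p-1) * (1-v) powr (q-1)) = Beta p q"
proof -
  show 1: "set_integrable lborel {0<..<1} (\<lambda>v. v powr (p-1) * (1-v) powr (q-1))"
    by (rule set_integrable_subset[OF integrable_Beta[OF assms]]) auto
  have "((\<lambda>v. v powr (p-1) * (1-v) powr (q-1)) has_integral Beta p q) {0<..<1}"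
    using has_integral_Beta_real[OF assms] by (simp add: has_integral_Icc_iff_Ioo)
  moreover have "(LINT v:{0<..<1}|lborel. v powr (p-1) * (1-v) powr (q-1)) =
     integral {0<..<1} (\<lambda>v. v powr (p-1) * (1-v) powr (q-1))"
    by (rule set_borel_integral_eq_integral(2)[OF 1])
  ultimately show "(LINT v:{0<..<1}|lborel. v powr (p-1) * (1-v) powr (q-1)) = Beta p q"
    by (simp add: integral_unique)
qed



lemma inner_beta:
  fixes \<alpha> u t :: real assumes al: "0 < \<alpha>" "\<alpha> < 1" and ut: "u < t"
  shows "set_integrable lborel {u<..<t} (\<lambda>s. 1 / (s-u) powr (1-\<alpha>) / (t-s) powr \<alpha>)"
    and "(LINT s:{u<..<t}|lborel. 1 / (s-u) powr (1-\<alpha>) / (t-s) powr \<alpha>) = Gamma \<alpha> * Gamma (1-\<alpha>)"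
proof -
  let ?F = "\<lambda>s. 1 / (s-u) powr (1-\<alpha>) / (t-s) powr \<alpha>"
  let ?G = "\<lambda>v. v powr (\<alpha>-1) * (1-v) powr ((1-\<alpha>)-1)"
  have d: "t - u > 0" using ut by simp
  have eq: "?F (u + (t-u) * v) = (1/(t-u)) * ?G v" if "v \<in> {0<..<1}" for v
  proof -
    have v: "v > 0" "1 - v > 0" using that by auto
    have "?F (u + (t-u) * v) = 1 / ((t-u) * v) powr (1-\<alpha>) / ((t-u) * (1-v)) powr \<alpha>"
      by (simp add: algebra_simps)
    also have "\<dots> = 1 / ((t-u) powr (1-\<alpha>) * (t-u) powr \<alpha>) * (1 / (v powr (1-\<alpha>) * (1-v) powr \<alpha>))"
      using d v by (simp add: powr_mult)
    also have "(t-u) powr (1-\<alpha>) * (t-u) powr \<alpha> = t - u"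
      using d by (simp add: powr_add[symmetric])
    also have "1 / (v powr (1-\<alpha>) * (1-v) powr \<alpha>) = ?G v"
      using v by (simp add: powr_minus_divide powr_diff divide_simps)
    finally show ?thesis .
  qed
  have GI: "set_integrable lborel {0<..<1} ?G" using Beta_Ioo(1)[of \<alpha> "1-\<alpha>"] al by simp
  have GV: "(LINT v:{0<..<1}|lborel. ?G v) = Gamma \<alpha> * Gamma (1-\<alpha>)"
    using Beta_Ioo(2)[of \<alpha> "1-\<alpha>"] al by (simp add: Beta_def)
  have c1: "set_integrable lborel {0<..<1} (\<lambda>v. ?F (u + (t-u) * v)) = set_integrable lborel {0<..<1} (\<lambda>v. (1/(t-u)) * ?G v)"
    by (rule set_integrable_cong) (use eq in auto)
  show "set_integrable lborel {u<..<t} ?F"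
    using subst_Ioo_integrable[OF ut, of ?F] c1 GI by simp
  have "(LINT s:{u<..<t}|lborel. ?F s) = (t-u) * (LINT v:{0<..<1}|lborel. ?F (u + (t-u) * v))"
    by (rule subst_Ioo_integral[OF ut])
  also have "(LINT v:{0<..<1}|lborel. ?F (u + (t-u) * v)) = (LINT v:{0<..<1}|lborel. (1/(t-u)) * ?G v)"
    by (rule set_lebesgue_integral_cong) (use eq in auto)
  finally show "(LINT s:{u<..<t}|lborel. ?F s) = Gamma \<alpha> * Gamma (1-\<alpha>)"
    using GV d by simp
qed



lemma fubini_RL:
  fixes \<alpha> t :: real and g :: "real \<Rightarrow> real"
  assumes al: "0 < \<alpha>" "\<alpha> < 1" and t: "t > 0"
    and gc: "continuous_on {0<..} g" and gi: "set_integrable lborel {0<..<t} g"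
  shows "(LINT s:{0<..<t}|lborel. (LINT u:{0<..<s}|lborel. g u / (s-u) powr (1-\<alpha>)) / (t-s) powr \<alpha>)
        = Gamma \<alpha> * Gamma (1-\<alpha>) * (LINT u:{0<..<t}|lborel. g u)"
proof -
  define K where "K = Gamma \<alpha> * Gamma (1-\<alpha>)"
  define g0 where "g0 u = indicator {0<..} u * g u" for u
  have g0m[measurable]: "g0 \<in> borel_measurable borel"
    unfolding g0_def using borel_measurable_continuous_on_indicator[OF _ gc] by simp
  define H where "H u s = of_bool (0 < u \<and> u < s \<and> s < t) * g0 u / (s-u) powr (1-\<alpha>) / (t-s) powr \<alpha>" for u s
  have Hm: "case_prod H \<in> borel_measurable (lborel \<Otimes>\<^sub>M lborel)"
    unfolding H_def by measurable
  have Halt: "H u s = indicator {0<..<t} u * g u * (indicator {u<..<t} s * (1 / (s-u) powr (1-\<alpha>) / (t-s) powr \<alpha>))" for u s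
    by (auto simp: H_def g0_def indicator_def)
  have inner: "integrable lborel (H u) \<and> (\<integral>s. H u s \<partial>lborel) = indicator {0<..<t} u * g u * K
      \<and> (\<integral>s. norm (H u s) \<partial>lborel) = indicator {0<..<t} u * \<bar>g u\<bar> * K" for u
  proof (cases "0 < u \<and> u < t")
    case True
    have I: "set_integrable lborel {u<..<t} (\<lambda>s. 1 / (s-u) powr (1-\<alpha>) / (t-s) powr \<alpha>)"
      and V: "(LINT s:{u<..<t}|lborel. 1 / (s-u) powr (1-\<alpha>) / (t-s) powr \<alpha>) = K"
      using inner_beta[OF al, of u t] True by (auto simp: K_def)
    have nn: "norm (H u s) = \<bar>g u\<bar> * (indicator {u<..<t} s * (1 / (s-u) powr (1-\<alpha>) / (t-s) powr \<alpha>))" for s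
      using True unfolding Halt by (auto simp: indicator_def abs_mult)
    define P where "P s = indicator {u<..<t} s * (1 / (s-u) powr (1-\<alpha>) / (t-s) powr \<alpha>)" for s
    have IP: "integrable lborel P" using I unfolding P_def by (simp add: set_integrable_def)
    have VP: "(\<integral>s. P s \<partial>lborel) = K" using V unfolding P_def by (simp add: set_lebesgue_integral_def)
    have e1: "H u = (\<lambda>s. (indicator {0<..<t} u * g u) * P s)" unfolding Halt P_def by auto
    have e2: "(\<lambda>s. norm (H u s)) = (\<lambda>s. \<bar>g u\<bar> * P s)" unfolding nn P_def by auto
    have Pn: "\<bar>P s\<bar> = P s" for s unfolding P_def by (simp add: indicator_def)
    show ?thesis unfolding e1 e2 using IP VP True
      by (simp add: indicator_def abs_mult Pn)
  next
    case False
    hence "H u = (\<lambda>s. 0)" unfolding Halt by (auto simp: indicator_def fun_eq_iff)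
    thus ?thesis using False by (simp add: indicator_def)
  qed
  have gia: "integrable lborel (\<lambda>u. indicator {0<..<t} u * \<bar>g u\<bar> * K)"
    using set_integrable_abs[OF gi] unfolding set_integrable_def
    by (intro integrable_mult_left) simp
  have Hint: "integrable (lborel \<Otimes>\<^sub>M lborel) (case_prod H)"
  proof (rule lborel_pair.Fubini_integrable)
    show "case_prod H \<in> borel_measurable (lborel \<Otimes>\<^sub>M lborel)" by (rule Hm)
    show "integrable lborel (\<lambda>x. \<integral>y. norm (case_prod H (x, y)) \<partial>lborel)"
      using inner gia by simp
    show "AE x in lborel. integrable lborel (\<lambda>y. case_prod H (x, y))"
      using inner by simp
  qed
  have F: "(\<integral>s. (\<integral>u. H u s \<partial>lborel) \<partial>lborel) = (\<integral>u. (\<integral>s. H u s \<partial>lborel) \<partial>lborel)"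
    by (rule lborel_pair.Fubini_integral[OF Hint])
  have R: "(\<integral>u. (\<integral>s. H u s \<partial>lborel) \<partial>lborel) = K * (LINT u:{0<..<t}|lborel. g u)"
    using inner by (simp add: set_lebesgue_integral_def mult_ac)
  have L: "(\<integral>u. H u s \<partial>lborel) = indicator {0<..<t} s *
        ((LINT u:{0<..<s}|lborel. g u / (s-u) powr (1-\<alpha>)) / (t-s) powr \<alpha>)" for s
  proof (cases "0 < s \<and> s < t")
    case True
    have "(\<lambda>u. H u s) = (\<lambda>u. (indicator {0<..<s} u * (g u / (s-u) powr (1-\<alpha>))) / (t-s) powr \<alpha>)"
      using True by (auto simp: H_def g0_def indicator_def fun_eq_iff)
    hence "(\<integral>u. H u s \<partial>lborel) = (\<integral>u. indicator {0<..<s} u * (g u / (s-u) powr (1-\<alpha>)) \<partial>lborel) / (t-s) powr \<alpha>"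
      by (simp only: integral_divide_zero)
    thus ?thesis using True by (simp add: set_lebesgue_integral_def indicator_def)
  next
    case False
    hence "H u s = 0" for u by (auto simp: H_def)
    thus ?thesis using False by (simp add: indicator_def)
  qed
  show ?thesis using F R unfolding L by (simp add: set_lebesgue_integral_def K_def)
qed



lemma powr_inf:
  fixes t p :: real assumes t: "t > 0" and p: "p < -1"
  shows "set_integrable lborel {t..} (\<lambda>s. s powr p)"
    and "(LINT s:{t..}|lborel. s powr p) = - (t powr (p+1)) / (p+1)"
proof -
  have HI: "((\<lambda>s. s powr p) has_integral - (t powr (p+1)) / (p+1)) {t..}"
    using has_integral_powr_to_inf[OF p t] by simp
  have nn: "(\<integral>\<^sup>+s. ennreal (s powr p) * indicator {t..} s \<partial>lborel) = ennreal (- (t powr (p+1)) / (p+1))"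
    by (rule nn_integral_has_integral_lebesgue'[OF _ HI]) simp
  have eq: "(\<lambda>s. ennreal (indicator {t..} s * s powr p)) = (\<lambda>s. ennreal (s powr p) * indicator {t..} s)"
    by (auto simp: indicator_def fun_eq_iff)
  have m: "(\<lambda>s. indicator {t..} s * s powr p) \<in> borel_measurable lborel" by measurable
  have I: "integrable lborel (\<lambda>s. indicator {t..} s * s powr p)"
    by (rule integrableI_nn_integral_finite[OF m]) (auto simp: eq nn)
  thus "set_integrable lborel {t..} (\<lambda>s. s powr p)" by (simp add: set_integrable_def)
  have "(\<integral>s. indicator {t..} s * s powr p \<partial>lborel) = enn2real (\<integral>\<^sup>+ s. ennreal (indicator {t..} s * s powr p) \<partial>lborel)"
    by (rule integral_eq_nn_integral[OF m]) auto
  also have "\<dots> = - (t powr (p+1)) / (p+1)" unfolding eq nn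
    using t p by (intro enn2real_ennreal) (auto intro!: divide_nonneg_neg)
  finally show "(LINT s:{t..}|lborel. s powr p) = - (t powr (p+1)) / (p+1)"
    by (simp add: set_lebesgue_integral_def)
qed

lemma DERIV_tail:
  fixes G :: "real \<Rightarrow> real"
  assumes Gc: "continuous_on {0<..} G" and Gi: "\<And>t. t > 0 \<Longrightarrow> set_integrable lborel {t..} G"
    and t0: "t0 > 0"
  shows "((\<lambda>t. LINT s:{t..}|lborel. G s) has_real_derivative - G t0) (at t0)"
proof -
  define c R where "c = t0/2" and "R = 2*t0"
  have cR: "0 < c" "c < t0" "t0 < R" using t0 by (auto simp: c_def R_def)
  have Gc2: "continuous_on {c..R} G" by (rule continuous_on_subset[OF Gc]) (use cR in auto)
  have eqn: "(LINT s:{t..}|lborel. G s) = integral {t..R} G + (LINT s:{R<..}|lborel. G s)"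
    if "t \<in> {c<..<R}" for t
  proof -
    have tt: "t > 0" using that cR by auto
    have i1: "set_integrable lborel {t..R} G"
      by (rule set_integrable_subset[OF Gi[OF tt]]) auto
    have i2: "set_integrable lborel {R<..} G"
      by (rule set_integrable_subset[OF Gi[OF tt]]) (use that in auto)
    have e: "{t..} = {t..R} \<union> {R<..}" using that by auto
    have "(LINT s:{t..R} \<union> {R<..}|lborel. G s) = (LINT s:{t..R}|lborel. G s) + (LINT s:{R<..}|lborel. G s)"
      by (rule set_integral_Un[OF _ i1 i2]) auto
    hence "(LINT s:{t..}|lborel. G s) = (LINT s:{t..R}|lborel. G s) + (LINT s:{R<..}|lborel. G s)"
      using e by simp
    also have "(LINT s:{t..R}|lborel. G s) = integral {t..R} G"
      by (rule set_borel_integral_eq_integral(2)[OF i1])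
    finally show ?thesis .
  qed
  have D: "((\<lambda>x. integral {x..R} G) has_real_derivative - G t0) (at t0 within {c..R})"
    by (rule integral_has_real_derivative'[OF Gc2]) (use cR in auto)
  have "at t0 within {c..R} = at t0" using cR by (intro at_within_Icc_at) auto
  with D have D': "((\<lambda>x. integral {x..R} G + (LINT s:{R<..}|lborel. G s)) has_real_derivative - G t0) (at t0)"
    by (auto intro!: derivative_eq_intros)
  show ?thesis
    by (rule has_field_derivative_transform_within_open[OF D', of "{c<..<R}"]) (use cR eqn in auto)
qed

lemma DERIV_head:
  fixes g :: "real \<Rightarrow> real"
  assumes gc: "continuous_on {0<..} g" and gi: "\<And>t. t > 0 \<Longrightarrow> set_integrable lborel {0<..<t} g"
    and t0: "t0 > 0"
  shows "((\<lambda>t. LINT u:{0<..<t}|lborel. g u) has_real_derivative g t0) (at t0)"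
proof -
  define c R where "c = t0/2" and "R = 2*t0"
  have cR: "0 < c" "c < t0" "t0 < R" using t0 by (auto simp: c_def R_def)
  have gc2: "continuous_on {c..R} g" by (rule continuous_on_subset[OF gc]) (use cR in auto)
  have eqn: "(LINT u:{0<..<t}|lborel. g u) = (LINT u:{0<..<c}|lborel. g u) + integral {c..t} g"
    if "t \<in> {c<..<R}" for t
  proof -
    have tt: "t > 0" using that cR by auto
    have i1: "set_integrable lborel {0<..<c} g"
      by (rule set_integrable_subset[OF gi[OF tt]]) (use that in auto)
    have i2: "set_integrable lborel {c..<t} g"
      by (rule set_integrable_subset[OF gi[OF tt]]) (use cR in auto)
    have e: "{0<..<t} = {0<..<c} \<union> {c..<t}" using that cR by auto
    have "(LINT u:{0<..<c} \<union> {c..<t}|lborel. g u) = (LINT u:{0<..<c}|lborel. g u) + (LINT u:{c..<t}|lborel. g u)"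
      by (rule set_integral_Un[OF _ i1 i2]) auto
    hence "(LINT u:{0<..<t}|lborel. g u) = (LINT u:{0<..<c}|lborel. g u) + (LINT u:{c..<t}|lborel. g u)"
      using e by simp
    also have "(LINT u:{c..<t}|lborel. g u) = (LINT u:{c..t}|lborel. g u)"
    proof (rule set_integral_cong_set)
      have gct: "continuous_on {c..t} g" by (rule continuous_on_subset[OF gc]) (use cR in auto)
      show "set_borel_measurable lborel {c..t} g"
        using set_measurable_continuous_on[OF _ gct] by (simp add: set_borel_measurable_def)
      have gct': "continuous_on {c..<t} g" by (rule continuous_on_subset[OF gc]) (use cR in auto)
      show "set_borel_measurable lborel {c..<t} g"
        using set_measurable_continuous_on[OF _ gct'] by (simp add: set_borel_measurable_def)
      show "AE x in lborel. (x \<in> {c..t}) = (x \<in> {c..<t})"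
        using AE_lborel_singleton[of t] by eventually_elim auto
    qed
    also have "(LINT u:{c..t}|lborel. g u) = integral {c..t} g"
      by (rule set_borel_integral_eq_integral(2)[OF borel_integrable_atLeastAtMost'])
         (rule continuous_on_subset[OF gc], use cR in auto)
    finally show ?thesis .
  qed
  have D: "((\<lambda>x. integral {c..x} g) has_real_derivative g t0) (at t0 within {c..R})"
    by (rule integral_has_real_derivative[OF gc2]) (use cR in auto)
  have "at t0 within {c..R} = at t0" using cR by (intro at_within_Icc_at) auto
  with D have D': "((\<lambda>x. (LINT u:{0<..<c}|lborel. g u) + integral {c..x} g) has_real_derivative g t0) (at t0)"
    by (auto intro!: derivative_eq_intros)
  show ?thesis
    by (rule has_field_derivative_transform_within_open[OF D', of "{c<..<R}"]) (use cR eqn in auto)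
qed



lemma isCont_param_integral:
  fixes Q :: "real \<Rightarrow> real \<Rightarrow> real" and w :: "real \<Rightarrow> real"
  assumes cd: "c < t0" "t0 < d"
    and meas: "\<And>s. s \<in> {c..d} \<Longrightarrow> Q s \<in> borel_measurable lborel"
    and wi: "integrable lborel w"
    and bnd: "\<And>s v. s \<in> {c..d} \<Longrightarrow> \<bar>Q s v\<bar> \<le> w v"
    and cont: "\<And>v. isCont (\<lambda>s. Q s v) t0"
  shows "isCont (\<lambda>s. \<integral>v. Q s v \<partial>lborel) t0"
  unfolding continuous_at_sequentially comp_def
proof (intro allI impI)
  fix X :: "nat \<Rightarrow> real" assume X: "X \<longlonglongrightarrow> t0"
  define Y where "Y n = max c (min d (X n))" for n
  have "(\<lambda>n. max c (min d (X n))) \<longlonglongrightarrow> max c (min d t0)"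
    by (intro tendsto_intros X)
  hence Y: "Y \<longlonglongrightarrow> t0" using cd unfolding Y_def by simp
  have Yin: "Y n \<in> {c..d}" for n using cd by (auto simp: Y_def)
  have "(\<lambda>n. \<integral>v. Q (Y n) v \<partial>lborel) \<longlonglongrightarrow> (\<integral>v. Q t0 v \<partial>lborel)"
  proof (rule integral_dominated_convergence[where w=w])
    show "Q t0 \<in> borel_measurable lborel" by (rule meas) (use cd in auto)
    show "\<And>n. Q (Y n) \<in> borel_measurable lborel" by (rule meas[OF Yin])
    show "integrable lborel w" by (rule wi)
    show "AE v in lborel. (\<lambda>n. Q (Y n) v) \<longlonglongrightarrow> Q t0 v"
      using cont Y by (intro AE_I2) (rule isCont_tendsto_compose)
    show "\<And>n. AE v in lborel. norm (Q (Y n) v) \<le> w v"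
      using bnd Yin by (intro AE_I2) simp
  qed
  moreover have "eventually (\<lambda>n. Y n = X n) sequentially"
  proof -
    have "eventually (\<lambda>n. X n \<in> {c<..<d}) sequentially"
      using X cd by (intro topological_tendstoD) auto
    thus ?thesis by eventually_elim (auto simp: Y_def)
  qed
  hence "eventually (\<lambda>n. (\<integral>v. Q (Y n) v \<partial>lborel) = (\<integral>v. Q (X n) v \<partial>lborel)) sequentially"
    by eventually_elim simp
  ultimately show "(\<lambda>n. \<integral>v. Q (X n) v \<partial>lborel) \<longlonglongrightarrow> (\<integral>v. Q t0 v \<partial>lborel)"
    by (rule Lim_transform_eventually)
qed



lemma set_integral_nonneg0:
  fixes f :: "'a \<Rightarrow> real"
  shows "(\<And>x. x \<in> A \<Longrightarrow> 0 \<le> f x) \<Longrightarrow> 0 \<le> (LINT x:A|M. f x)"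
  unfolding set_lebesgue_integral_def by (rule Bochner_Integration.integral_nonneg) (auto simp: indicator_def)

lemma powr_neg_eq: "(x::real) powr (\<alpha> - 1) = 1 / x powr (1 - \<alpha>)"
  by (metis minus_diff_eq powr_minus_divide)

locale setting =
  fixes \<alpha> :: real and a :: "real \<Rightarrow> real"
  assumes al: "0 < \<alpha>" "\<alpha> < 1"
    and a_cont: "continuous_on {0..} a"
    and int2: "\<And>t. t > 0 \<Longrightarrow>
        set_integrable lborel {0<..<t} (\<lambda>s. s * \<bar>a s\<bar> / (t - s) powr (1 - \<alpha>))"
    and sup1: "bdd_above ((\<lambda>t. t powr (1 - \<alpha>) *
        (LINT s:{0<..<t}|lborel. s * \<bar>a s\<bar> / (t - s) powr (1 - \<alpha>))) ` {0<..})"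
    and int4: "\<And>t. t > 0 \<Longrightarrow>
        set_integrable lborel {0<..<t}
          (\<lambda>s. \<bar>a s\<bar> / ((t - s) powr (1 - \<alpha>) * s powr (1 - \<alpha>)))"
    and sup2: "bdd_above ((\<lambda>t. t powr (1 - \<alpha>) *
        (LINT s:{0<..<t}|lborel. \<bar>a s\<bar> / ((t - s) powr (1 - \<alpha>) * s powr (1 - \<alpha>)))) ` {0<..})"
begin

definition I2 where "I2 t = (LINT s:{0<..<t}|lborel. s * \<bar>a s\<bar> / (t - s) powr (1 - \<alpha>))"
definition I4 where "I4 t = (LINT s:{0<..<t}|lborel. \<bar>a s\<bar> / ((t - s) powr (1 - \<alpha>) * s powr (1 - \<alpha>)))"
definition S1 where "S1 = (SUP t\<in>{0<..}. t powr (1 - \<alpha>) * I2 t)"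
definition chi where "chi = (SUP t\<in>{0<..}. t powr (1 - \<alpha>) * I4 t)"
definition Fr where "Fr y s = (LINT u:{0<..<s}|lborel. a u * y u / (s - u) powr (1 - \<alpha>))"
definition cls where "cls B M y \<longleftrightarrow> continuous_on {0<..} y \<and> (\<forall>t>0. \<bar>y t\<bar> \<le> B * t + M * t powr (\<alpha> - 1))"

lemma I2_le: "t > 0 \<Longrightarrow> I2 t \<le> S1 * t powr (\<alpha> - 1)"
proof -
  assume t: "t > 0"
  have "t powr (1 - \<alpha>) * I2 t \<le> S1"
    unfolding S1_def I2_def by (rule cSUP_upper[OF _ sup1]) (use t in auto)
  hence "t powr (\<alpha> - 1) * (t powr (1 - \<alpha>) * I2 t) \<le> t powr (\<alpha> - 1) * S1"
    by (rule mult_left_mono) simp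
  moreover have "t powr (\<alpha> - 1) * t powr (1 - \<alpha>) = 1" using t by (simp add: powr_add[symmetric])
  ultimately show ?thesis by (simp add: algebra_simps)
qed

lemma I4_le: "t > 0 \<Longrightarrow> I4 t \<le> chi * t powr (\<alpha> - 1)"
proof -
  assume t: "t > 0"
  have "t powr (1 - \<alpha>) * I4 t \<le> chi"
    unfolding chi_def I4_def by (rule cSUP_upper[OF _ sup2]) (use t in auto)
  hence "t powr (\<alpha> - 1) * (t powr (1 - \<alpha>) * I4 t) \<le> t powr (\<alpha> - 1) * chi"
    by (rule mult_left_mono) simp
  moreover have "t powr (\<alpha> - 1) * t powr (1 - \<alpha>) = 1" using t by (simp add: powr_add[symmetric])
  ultimately show ?thesis by (simp add: algebra_simps)
qed

lemma chi_nonneg: "chi \<ge> 0"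
proof -
  have "1 powr (1 - \<alpha>) * I4 1 \<le> chi"
    unfolding chi_def I4_def by (rule cSUP_upper[OF _ sup2]) auto
  moreover have "I4 1 \<ge> 0" unfolding I4_def
    by (rule set_integral_nonneg0) auto
  ultimately show ?thesis by simp
qed

lemma Fr_int:
  assumes y: "cls B M y" and BM: "B \<ge> 0" "M \<ge> 0" and s: "s > 0"
  shows "set_integrable lborel {0<..<s} (\<lambda>u. a u * y u / (s - u) powr (1 - \<alpha>))"
    and "\<bar>Fr y s\<bar> \<le> (B * S1 + M * chi) * s powr (\<alpha> - 1)"
proof -
  let ?f = "\<lambda>u. B * (u * \<bar>a u\<bar> / (s - u) powr (1 - \<alpha>)) + M * (\<bar>a u\<bar> / ((s - u) powr (1 - \<alpha>) * u powr (1 - \<alpha>)))"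
  have fi: "set_integrable lborel {0<..<s} ?f"
    using int2[OF s] int4[OF s] by (intro set_integral_add set_integrable_mult_right) auto
  have yc: "continuous_on {0<..<s} y" using y unfolding cls_def
    by (auto elim: continuous_on_subset)
  have ac: "continuous_on {0<..<s} a" by (rule continuous_on_subset[OF a_cont]) auto
  have cc: "continuous_on {0<..<s} (\<lambda>u. a u * y u / (s - u) powr (1 - \<alpha>))"
    by (intro continuous_intros yc ac) auto
  have bnd: "\<bar>a u * y u / (s - u) powr (1 - \<alpha>)\<bar> \<le> ?f u" if u: "u \<in> {0<..<s}" for u
  proof -
    have yb: "\<bar>y u\<bar> \<le> B * u + M * u powr (\<alpha> - 1)" using y u unfolding cls_def by auto
    have sp: "(s - u) powr (1 - \<alpha>) > 0" using u by simp
    have "\<bar>a u * y u / (s - u) powr (1 - \<alpha>)\<bar> = \<bar>a u\<bar> * \<bar>y u\<bar> / (s - u) powr (1 - \<alpha>)"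
      using sp by (simp add: abs_mult)
    also have "\<dots> \<le> \<bar>a u\<bar> * (B * u + M * u powr (\<alpha> - 1)) / (s - u) powr (1 - \<alpha>)"
      using sp yb by (intro divide_right_mono mult_left_mono) auto
    also have "\<dots> = ?f u" using sp u by (simp add: powr_neg_eq field_simps)
    finally show ?thesis .
  qed
  show I: "set_integrable lborel {0<..<s} (\<lambda>u. a u * y u / (s - u) powr (1 - \<alpha>))"
  proof (rule set_integrable_bound[OF fi])
    show "set_borel_measurable lborel {0<..<s} (\<lambda>u. a u * y u / (s - u) powr (1 - \<alpha>))"
      using set_measurable_continuous_on[OF _ cc] by (simp add: set_borel_measurable_def)
    show "AE x in lborel. x \<in> {0<..<s} \<longrightarrow> norm (a x * y x / (s - x) powr (1 - \<alpha>)) \<le> norm (?f x)"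
      using bnd by (intro AE_I2) force
  qed
  have "\<bar>Fr y s\<bar> \<le> (LINT u:{0<..<s}|lborel. norm (a u * y u / (s - u) powr (1 - \<alpha>)))"
    unfolding Fr_def using set_integral_norm_bound[OF I] by simp
  also have "\<dots> \<le> (LINT u:{0<..<s}|lborel. ?f u)"
  proof (rule set_integral_mono[OF _ fi])
    show "set_integrable lborel {0<..<s} (\<lambda>u. norm (a u * y u / (s - u) powr (1 - \<alpha>)))"
      using set_integrable_abs[OF I] by simp
  qed (use bnd in auto)
  also have "\<dots> = B * I2 s + M * I4 s"
  proof -
    have i1: "set_integrable lborel {0<..<s} (\<lambda>u. B * (u * \<bar>a u\<bar> / (s - u) powr (1 - \<alpha>)))"
      by (rule set_integrable_mult_right[OF int2[OF s]])
    have i2: "set_integrable lborel {0<..<s} (\<lambda>u. M * (\<bar>a u\<bar> / ((s - u) powr (1 - \<alpha>) * u powr (1 - \<alpha>))))"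
      by (rule set_integrable_mult_right[OF int4[OF s]])
    show ?thesis unfolding I2_def I4_def set_integral_add(2)[OF i1 i2]
      by (simp only: set_integral_mult_right)
  qed
  also have "\<dots> \<le> B * (S1 * s powr (\<alpha> - 1)) + M * (chi * s powr (\<alpha> - 1))"
    using I2_le[OF s] I4_le[OF s] BM by (intro add_mono mult_left_mono) auto
  finally show "\<bar>Fr y s\<bar> \<le> (B * S1 + M * chi) * s powr (\<alpha> - 1)" by (simp add: algebra_simps)
qed

end



context setting begin

definition Qf where "Qf y s v = indicator {0<..<1} v * (a (s * v) * y (s * v) / (s * (1 - v)) powr (1 - \<alpha>))"
definition e1 where "e1 v = indicator {0<..<1} v * (1 - v) powr (\<alpha> - 1)"
definition e2 where "e2 v = indicator {0<..<1} v * (v powr (\<alpha> - 1) * (1 - v) powr (\<alpha> - 1))"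

lemma e1_int: "integrable lborel e1"
proof -
  have "set_integrable lborel {0<..<1} (\<lambda>v. v powr (1 - 1) * (1 - v) powr (\<alpha> - 1))"
    using Beta_Ioo(1)[of 1 \<alpha>] al by simp
  hence "set_integrable lborel {0<..<1} (\<lambda>v. (1 - v) powr (\<alpha> - 1))"
    by (rule set_integrable_cong[THEN iffD1, rotated -1]) auto
  thus ?thesis unfolding e1_def set_integrable_def by simp
qed

lemma e2_int: "integrable lborel e2"
  using Beta_Ioo(1)[of \<alpha> \<alpha>] al unfolding e2_def set_integrable_def by simp

lemma e_nonneg: "e1 v \<ge> 0" "e2 v \<ge> 0"
  unfolding e1_def e2_def by (auto simp: indicator_def)

lemma a_bnd: "\<exists>A\<ge>0. \<forall>u\<in>{0..d}. \<bar>a u\<bar> \<le> A"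
proof -
  have "bounded (a ` {0..d})"
    by (rule compact_imp_bounded[OF compact_continuous_image[OF continuous_on_subset[OF a_cont] compact_Icc]]) auto
  then obtain K where "\<forall>x\<in>a ` {0..d}. norm x \<le> K" by (auto simp: bounded_iff)
  thus ?thesis by (intro exI[of _ "max K 0"]) force
qed

lemma Fr_subst: "s > 0 \<Longrightarrow> Fr y s = s * (\<integral>v. Qf y s v \<partial>lborel)"
proof -
  assume s: "s > 0"
  have "Fr y s = (s - 0) * (LINT v:{0<..<1}|lborel. a (0 + (s - 0) * v) * y (0 + (s - 0) * v) / (s - (0 + (s - 0) * v)) powr (1 - \<alpha>))"
    unfolding Fr_def by (rule subst_Ioo_integral) (use s in auto)
  also have "(\<lambda>v. s - (0 + (s - 0) * v)) = (\<lambda>v. s * (1 - v))" by (auto simp: algebra_simps)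
  finally show ?thesis by (simp add: set_lebesgue_integral_def Qf_def)
qed

lemma Q_bound:
  assumes y: "cls B M y" and BM: "B \<ge> 0" "M \<ge> 0" and c: "0 < c" "c \<le> s" "s \<le> d"
    and A: "\<forall>u\<in>{0..d}. \<bar>a u\<bar> \<le> A"
  shows "\<bar>Qf y s v\<bar> \<le> A * B * d * c powr (\<alpha> - 1) * e1 v + A * M * (c powr (\<alpha> - 1) * c powr (\<alpha> - 1)) * e2 v"
proof (cases "v \<in> {0<..<1}")
  case False thus ?thesis unfolding Qf_def e1_def e2_def by simp
next
  case True
  hence v: "0 < v" "v < 1" by auto
  have s: "s > 0" using c by simp
  have A0: "A \<ge> 0" using A[rule_format, of 0] c by auto
  have sv: "s * v > 0" "s * v \<le> d" using v s c by (auto simp: mult_le_cancel_left1 intro: order.trans[of _ s])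
  have aa: "\<bar>a (s * v)\<bar> \<le> A" using A sv by auto
  have yb: "\<bar>y (s * v)\<bar> \<le> B * (s * v) + M * (s * v) powr (\<alpha> - 1)" using y sv unfolding cls_def by auto
  have p1: "(s * v) powr (\<alpha> - 1) \<le> (c * v) powr (\<alpha> - 1)"
    by (rule powr_mono2') (use al v c in auto)
  have p2: "(s * (1 - v)) powr (\<alpha> - 1) \<le> (c * (1 - v)) powr (\<alpha> - 1)"
    by (rule powr_mono2') (use al v c in auto)
  have Bsv: "B * (s * v) \<le> B * d" using BM sv by (intro mult_left_mono) auto
  have yb2: "\<bar>y (s * v)\<bar> \<le> B * d + M * (c powr (\<alpha> - 1) * v powr (\<alpha> - 1))"
  proof -
    have "(s * v) powr (\<alpha> - 1) \<le> c powr (\<alpha> - 1) * v powr (\<alpha> - 1)"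
      using p1 v c by (simp add: powr_mult)
    hence "M * (s * v) powr (\<alpha> - 1) \<le> M * (c powr (\<alpha> - 1) * v powr (\<alpha> - 1))"
      using BM(2) by (rule mult_left_mono)
    thus ?thesis using yb Bsv by linarith
  qed
  have "\<bar>Qf y s v\<bar> = \<bar>a (s * v)\<bar> * \<bar>y (s * v)\<bar> * (s * (1 - v)) powr (\<alpha> - 1)"
    using v s by (simp add: Qf_def abs_mult powr_neg_eq)
  also have "\<dots> \<le> A * (B * d + M * (c powr (\<alpha> - 1) * v powr (\<alpha> - 1))) * (c powr (\<alpha> - 1) * (1 - v) powr (\<alpha> - 1))"
    using p2 v c by (intro mult_mono aa yb2) (auto simp: powr_mult A0 BM)
  also have "\<dots> = A * B * d * c powr (\<alpha> - 1) * e1 v + A * M * (c powr (\<alpha> - 1) * c powr (\<alpha> - 1)) * e2 v"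
    using v by (simp add: e1_def e2_def algebra_simps)
  finally show ?thesis .
qed

end



context setting begin

lemma ac_open: "continuous_on {0<..} a"
  by (rule continuous_on_subset[OF a_cont]) auto

lemma Qf_meas:
  assumes y: "cls B M y" and s: "s > 0"
  shows "Qf y s \<in> borel_measurable lborel"
proof -
  have yc: "continuous_on {0<..} y" using y by (simp add: cls_def)
  have c1: "continuous_on {0<..<1} (\<lambda>v. a (s * v))"
    by (rule continuous_on_compose2[OF ac_open]) (use s in \<open>auto intro!: continuous_intros\<close>)
  have c2: "continuous_on {0<..<1} (\<lambda>v. y (s * v))"
    by (rule continuous_on_compose2[OF yc]) (use s in \<open>auto intro!: continuous_intros\<close>)
  have c: "continuous_on {0<..<1} (\<lambda>v. a (s * v) * y (s * v) / (s * (1 - v)) powr (1 - \<alpha>))"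
    by (intro continuous_intros c1 c2) (use s in auto)
  show ?thesis
    using borel_measurable_continuous_on_indicator[OF _ c] unfolding Qf_def by simp
qed

lemma Fr_cont:
  assumes y: "cls B M y" and BM: "B \<ge> 0" "M \<ge> 0"
  shows "continuous_on {0<..} (Fr y)"
proof (intro continuous_at_imp_continuous_on ballI)
  fix t0 :: real assume "t0 \<in> {0<..}"
  hence t0: "t0 > 0" by simp
  define c d where "c = t0/2" and "d = 2*t0"
  have cd: "0 < c" "c < t0" "t0 < d" using t0 by (auto simp: c_def d_def)
  obtain A where A: "A \<ge> 0" "\<forall>u\<in>{0..d}. \<bar>a u\<bar> \<le> A" using a_bnd by blast
  have yc: "continuous_on {0<..} y" using y by (simp add: cls_def)
  have ic: "isCont (\<lambda>s. \<integral>v. Qf y s v \<partial>lborel) t0"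
  proof (rule isCont_param_integral[OF cd(2,3)])
    show "Qf y s \<in> borel_measurable lborel" if "s \<in> {c..d}" for s
      by (rule Qf_meas[OF y]) (use that cd in auto)
    show "integrable lborel (\<lambda>v. A * B * d * c powr (\<alpha> - 1) * e1 v + A * M * (c powr (\<alpha> - 1) * c powr (\<alpha> - 1)) * e2 v)"
      using e1_int e2_int by (intro Bochner_Integration.integrable_add Bochner_Integration.integrable_mult_right)
    show "\<bar>Qf y s v\<bar> \<le> A * B * d * c powr (\<alpha> - 1) * e1 v + A * M * (c powr (\<alpha> - 1) * c powr (\<alpha> - 1)) * e2 v"
      if "s \<in> {c..d}" for s v
      by (rule Q_bound[OF y BM]) (use that cd A in auto)
    show "isCont (\<lambda>s. Qf y s v) t0" for v
    proof (cases "v \<in> {0<..<1}")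
      case False thus ?thesis by (simp add: Qf_def)
    next
      case True
      have tv: "t0 * v > 0" using True t0 by simp
      have ca: "isCont a (t0 * v)"
        using ac_open tv continuous_on_eq_continuous_at[of "{0<..}" a] by auto
      have cy: "isCont y (t0 * v)"
        using yc tv continuous_on_eq_continuous_at[of "{0<..}" y] by auto
      have m: "isCont (\<lambda>s. s * v) t0" by (intro continuous_intros)
      have c1: "isCont (\<lambda>s. a (s * v)) t0" using isCont_o2[OF m, of a] ca by simp
      have c2: "isCont (\<lambda>s. y (s * v)) t0" using isCont_o2[OF m, of y] cy by simp
      have c3: "isCont (\<lambda>s. (s * (1 - v)) powr (1 - \<alpha>)) t0"
        using True t0 by (intro continuous_intros) auto
      have "isCont (\<lambda>s. indicator {0<..<1} v * (a (s * v) * y (s * v) / (s * (1 - v)) powr (1 - \<alpha>))) t0"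
        using True t0 by (intro continuous_intros c1 c2 c3) auto
      thus ?thesis by (simp add: Qf_def)
    qed
  qed
  hence ic2: "isCont (\<lambda>s. s * (\<integral>v. Qf y s v \<partial>lborel)) t0" by (intro continuous_intros)
  have ev: "eventually (\<lambda>s. s * (\<integral>v. Qf y s v \<partial>lborel) = Fr y s) (nhds t0)"
  proof -
    have "eventually (\<lambda>s. s \<in> {0<..}) (nhds t0)" using t0 by (intro eventually_nhds_in_open) auto
    thus ?thesis by eventually_elim (simp add: Fr_subst)
  qed
  show "isCont (Fr y) t0" using ic2 isCont_cong[OF ev] by simp
qed

lemma Fr_lim0:
  assumes y: "cls B M y" and BM: "B \<ge> 0" "M \<ge> 0"
  shows "((\<lambda>t. t powr (1 - \<alpha>) * Fr y t) \<longlongrightarrow> 0) (at_right 0)"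
proof -
  obtain A where A: "A \<ge> 0" "\<forall>u\<in>{0..1}. \<bar>a u\<bar> \<le> A" using a_bnd by blast
  define C1 C2 where "C1 = (\<integral>v. e1 v \<partial>lborel)" and "C2 = (\<integral>v. e2 v \<partial>lborel)"
  show ?thesis
  proof (rule Lim_null_comparison)
  show "eventually (\<lambda>t. norm (t powr (1 - \<alpha>) * Fr y t) \<le> A * B * C1 * t + A * M * C2 * t powr \<alpha>) (at_right 0)"
  proof -
    have "eventually (\<lambda>t. t \<in> {0<..<1}) (at_right (0::real))"
      by (rule eventually_at_right_real) simp
    thus ?thesis
    proof eventually_elim
      case (elim t)
      hence t: "0 < t" "t < 1" by auto
      have "\<bar>\<integral>v. Qf y t v \<partial>lborel\<bar> \<le> (\<integral>v. \<bar>Qf y t v\<bar> \<partial>lborel)"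
        using integral_norm_bound[of lborel "Qf y t"] by simp
      also have "\<dots> \<le> (\<integral>v. A * B * 1 * t powr (\<alpha> - 1) * e1 v + A * M * (t powr (\<alpha> - 1) * t powr (\<alpha> - 1)) * e2 v \<partial>lborel)"
      proof (rule integral_mono')
        show "integrable lborel (\<lambda>v. A * B * 1 * t powr (\<alpha> - 1) * e1 v + A * M * (t powr (\<alpha> - 1) * t powr (\<alpha> - 1)) * e2 v)"
          using e1_int e2_int by (intro Bochner_Integration.integrable_add Bochner_Integration.integrable_mult_right)
        show "\<bar>Qf y t v\<bar> \<le> A * B * 1 * t powr (\<alpha> - 1) * e1 v + A * M * (t powr (\<alpha> - 1) * t powr (\<alpha> - 1)) * e2 v" for v
          by (rule Q_bound[OF y BM]) (use t A in auto)
        show "0 \<le> A * B * 1 * t powr (\<alpha> - 1) * e1 v + A * M * (t powr (\<alpha> - 1) * t powr (\<alpha> - 1)) * e2 v" for v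
          using A BM e_nonneg[of v] by (intro add_nonneg_nonneg mult_nonneg_nonneg) auto
      qed
      also have "\<dots> = A * B * t powr (\<alpha> - 1) * C1 + A * M * (t powr (\<alpha> - 1) * t powr (\<alpha> - 1)) * C2"
        unfolding C1_def C2_def using e1_int e2_int by simp
      finally have I: "\<bar>\<integral>v. Qf y t v \<partial>lborel\<bar> \<le> A * B * t powr (\<alpha> - 1) * C1 + A * M * (t powr (\<alpha> - 1) * t powr (\<alpha> - 1)) * C2" .
      have "norm (t powr (1 - \<alpha>) * Fr y t) = t powr (1 - \<alpha>) * t * \<bar>\<integral>v. Qf y t v \<partial>lborel\<bar>"
        using t by (simp add: Fr_subst abs_mult)
      also have "\<dots> \<le> t powr (1 - \<alpha>) * t * (A * B * t powr (\<alpha> - 1) * C1 + A * M * (t powr (\<alpha> - 1) * t powr (\<alpha> - 1)) * C2)"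
        using I t by (intro mult_left_mono) auto
      also have "\<dots> = A * B * C1 * t + A * M * C2 * t powr \<alpha>"
      proof -
        have "t powr (1 - \<alpha>) * t powr (\<alpha> - 1) = 1" using t by (simp add: powr_add[symmetric])
        moreover have "t * t powr (\<alpha> - 1) = t powr \<alpha>" using t by (simp add: powr_add[symmetric] powr_mult_base)
        ultimately show ?thesis by (simp add: algebra_simps)
      qed
      finally show ?case .
    qed
  qed
  have "((\<lambda>t. t powr \<alpha>) \<longlongrightarrow> 0) (at_right (0::real))"
    by (rule tendsto_zero_powrI) (use al in \<open>auto intro!: tendsto_intros eventually_at_rightI[of 0 1]\<close>)
  hence "((\<lambda>t. A * B * C1 * t + A * M * C2 * t powr \<alpha>) \<longlongrightarrow> A * B * C1 * 0 + A * M * C2 * 0) (at_right (0::real))"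
    by (intro tendsto_intros) auto
  thus "((\<lambda>t. A * B * C1 * t + A * M * C2 * t powr \<alpha>) \<longlongrightarrow> 0) (at_right (0::real))" by simp
  qed
qed

end



context setting begin

definition J where "J y t = (LINT s:{t..}|lborel. Fr y s / s^2)"

lemma Fr_over_sq_cont:
  assumes y: "cls B M y" and BM: "B \<ge> 0" "M \<ge> 0"
  shows "continuous_on {0<..} (\<lambda>s. Fr y s / s^2)"
  using Fr_cont[OF y BM] by (intro continuous_intros) auto

lemma J_int:
  assumes y: "cls B M y" and BM: "B \<ge> 0" "M \<ge> 0" and t: "t > 0"
  shows "set_integrable lborel {t..} (\<lambda>s. Fr y s / s^2)"
    and "\<bar>J y t\<bar> \<le> (B * S1 + M * chi) * t powr (\<alpha> - 2) / (2 - \<alpha>)"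
proof -
  define C where "C = B * S1 + M * chi"
  have pi: "set_integrable lborel {t..} (\<lambda>s. s powr (\<alpha> - 3))"
    using powr_inf(1)[OF t, of "\<alpha> - 3"] al by simp
  have pv: "(LINT s:{t..}|lborel. s powr (\<alpha> - 3)) = t powr (\<alpha> - 2) / (2 - \<alpha>)"
    using powr_inf(2)[OF t, of "\<alpha> - 3"] al by (simp add: divide_simps) (simp add: algebra_simps)
  have bnd: "\<bar>Fr y s / s^2\<bar> \<le> C * s powr (\<alpha> - 3)" if "s \<in> {t..}" for s
  proof -
    have s: "s > 0" using that t by simp
    have "\<bar>Fr y s / s^2\<bar> = \<bar>Fr y s\<bar> / s^2" by (simp add: abs_div)
    also have "\<dots> \<le> C * s powr (\<alpha> - 1) / s^2"
      using Fr_int(2)[OF y BM s] by (intro divide_right_mono) (auto simp: C_def)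
    also have "\<dots> = C * (s powr (\<alpha> - 1) / s^2)" by simp
    also have "s powr (\<alpha> - 1) / s^2 = s powr (\<alpha> - 3)"
    proof -
      have "s powr (\<alpha> - 3) = s powr ((\<alpha> - 1) - 2)" by simp
      also have "\<dots> = s powr (\<alpha> - 1) / s powr 2" by (rule powr_diff)
      also have "s powr 2 = s^2" using s by (simp add: powr_numeral)
      finally show ?thesis by simp
    qed
    finally show ?thesis by simp
  qed
  have cc: "continuous_on {t..} (\<lambda>s. Fr y s / s^2)"
    by (rule continuous_on_subset[OF Fr_over_sq_cont[OF y BM]]) (use t in auto)
  show I: "set_integrable lborel {t..} (\<lambda>s. Fr y s / s^2)"
  proof (rule set_integrable_bound[OF set_integrable_mult_right[OF pi, of C]])
    show "set_borel_measurable lborel {t..} (\<lambda>s. Fr y s / s^2)"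
      using set_measurable_continuous_on[OF _ cc] by (simp add: set_borel_measurable_def)
    show "AE x in lborel. x \<in> {t..} \<longrightarrow> norm (Fr y x / x^2) \<le> norm (C * x powr (\<alpha> - 3))"
      using bnd by (intro AE_I2) force
  qed
  have "\<bar>J y t\<bar> \<le> (LINT s:{t..}|lborel. norm (Fr y s / s^2))"
    unfolding J_def using set_integral_norm_bound[OF I] by simp
  also have "\<dots> \<le> (LINT s:{t..}|lborel. C * s powr (\<alpha> - 3))"
  proof (rule set_integral_mono)
    show "set_integrable lborel {t..} (\<lambda>s. norm (Fr y s / s^2))"
      using set_integrable_abs[OF I] by simp
    show "set_integrable lborel {t..} (\<lambda>s. C * s powr (\<alpha> - 3))"
      by (rule set_integrable_mult_right[OF pi])
  qed (use bnd in auto)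
  also have "\<dots> = C * (t powr (\<alpha> - 2) / (2 - \<alpha>))" using pv by simp
  finally show "\<bar>J y t\<bar> \<le> (B * S1 + M * chi) * t powr (\<alpha> - 2) / (2 - \<alpha>)" by (simp add: C_def)
qed

lemma J_deriv:
  assumes y: "cls B M y" and BM: "B \<ge> 0" "M \<ge> 0" and t: "t > 0"
  shows "(J y has_real_derivative - (Fr y t / t^2)) (at t)"
  unfolding J_def
  by (rule DERIV_tail[OF Fr_over_sq_cont[OF y BM] J_int(1)[OF y BM] t])

lemma Fr_diff:
  assumes y1: "cls B1 M1 y1" and y2: "cls B2 M2 y2" and BM: "B1 \<ge> 0" "M1 \<ge> 0" "B2 \<ge> 0" "M2 \<ge> 0"
    and s: "s > 0"
  shows "Fr (\<lambda>u. y1 u - y2 u) s = Fr y1 s - Fr y2 s"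
proof -
  have "Fr y1 s - Fr y2 s = (LINT u:{0<..<s}|lborel. a u * y1 u / (s - u) powr (1 - \<alpha>) - a u * y2 u / (s - u) powr (1 - \<alpha>))"
    unfolding Fr_def
    by (rule set_integral_diff(2)[symmetric, OF Fr_int(1)[OF y1 BM(1,2) s] Fr_int(1)[OF y2 BM(3,4) s]])
  also have "\<dots> = Fr (\<lambda>u. y1 u - y2 u) s"
    unfolding Fr_def by (rule set_lebesgue_integral_cong) (auto simp: algebra_simps diff_divide_distrib)
  finally show ?thesis by simp
qed

lemma J_diff:
  assumes y1: "cls B1 M1 y1" and y2: "cls B2 M2 y2" and BM: "B1 \<ge> 0" "M1 \<ge> 0" "B2 \<ge> 0" "M2 \<ge> 0"
    and t: "t > 0"
  shows "J (\<lambda>u. y1 u - y2 u) t = J y1 t - J y2 t"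
proof -
  have "J y1 t - J y2 t = (LINT s:{t..}|lborel. Fr y1 s / s^2 - Fr y2 s / s^2)"
    unfolding J_def
    by (rule set_integral_diff(2)[symmetric, OF J_int(1)[OF y1 BM(1,2) t] J_int(1)[OF y2 BM(3,4) t]])
  also have "\<dots> = J (\<lambda>u. y1 u - y2 u) t"
    unfolding J_def
    by (rule set_lebesgue_integral_cong) (use t in \<open>auto simp: Fr_diff[OF y1 y2 BM] diff_divide_distrib\<close>)
  finally show ?thesis by simp
qed

end



lemma powr_0_int:
  fixes t p :: real assumes t: "t > 0" and p: "p > -1"
  shows "set_integrable lborel {0<..<t} (\<lambda>s. s powr p)"
proof -
  have HI: "((\<lambda>s. s powr p) has_integral t powr (p+1) / (p+1)) {0..t}"
    using has_integral_powr_from_0[OF p] t by simp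
  have nn: "(\<integral>\<^sup>+s. ennreal (s powr p) * indicator {0..t} s \<partial>lborel) = ennreal (t powr (p+1) / (p+1))"
    by (rule nn_integral_has_integral_lebesgue'[OF _ HI]) simp
  have eq: "(\<lambda>s. ennreal (indicator {0..t} s * s powr p)) = (\<lambda>s. ennreal (s powr p) * indicator {0..t} s)"
    by (auto simp: indicator_def fun_eq_iff)
  have m: "(\<lambda>s. indicator {0..t} s * s powr p) \<in> borel_measurable lborel" by measurable
  have I: "integrable lborel (\<lambda>s. indicator {0..t} s * s powr p)"
    by (rule integrableI_nn_integral_finite[OF m]) (auto simp: eq nn)
  hence "set_integrable lborel {0..t} (\<lambda>s. s powr p)" by (simp add: set_integrable_def)
  thus ?thesis by (rule set_integrable_subset) auto
qed

context setting begin

lemma ay_int: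
  assumes y: "cls B M y" and BM: "B \<ge> 0" "M \<ge> 0" and t: "t > 0"
  shows "set_integrable lborel {0<..<t} (\<lambda>u. a u * y u)"
proof -
  obtain A where A: "A \<ge> 0" "\<forall>u\<in>{0..t}. \<bar>a u\<bar> \<le> A" using a_bnd by blast
  have ci: "set_integrable lborel {0<..<t} (\<lambda>u. A * B * t)"
    by (rule set_integrable_subset[OF borel_integrable_atLeastAtMost'[of 0 t]]) auto
  have pi: "set_integrable lborel {0<..<t} (\<lambda>u. A * M * u powr (\<alpha> - 1))"
    using powr_0_int[OF t, of "\<alpha> - 1"] al by (intro set_integrable_mult_right) auto
  have fi: "set_integrable lborel {0<..<t} (\<lambda>u. A * B * t + A * M * u powr (\<alpha> - 1))"
    by (rule set_integral_add(1)[OF ci pi])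
  have yc: "continuous_on {0<..<t} y" using y unfolding cls_def by (auto elim: continuous_on_subset)
  have ac: "continuous_on {0<..<t} a" by (rule continuous_on_subset[OF a_cont]) auto
  have cc: "continuous_on {0<..<t} (\<lambda>u. a u * y u)" by (intro continuous_intros yc ac)
  show ?thesis
  proof (rule set_integrable_bound[OF fi])
    show "set_borel_measurable lborel {0<..<t} (\<lambda>u. a u * y u)"
      using set_measurable_continuous_on[OF _ cc] by (simp add: set_borel_measurable_def)
    have "norm (a u * y u) \<le> norm (A * B * t + A * M * u powr (\<alpha> - 1))" if u: "u \<in> {0<..<t}" for u
    proof -
      have yb: "\<bar>y u\<bar> \<le> B * u + M * u powr (\<alpha> - 1)" using y u unfolding cls_def by auto
      have "B * u \<le> B * t" using u BM by (intro mult_left_mono) auto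
      hence yb2: "\<bar>y u\<bar> \<le> B * t + M * u powr (\<alpha> - 1)" using yb by linarith
      have "\<bar>a u * y u\<bar> = \<bar>a u\<bar> * \<bar>y u\<bar>" by (simp add: abs_mult)
      also have "\<dots> \<le> A * (B * t + M * u powr (\<alpha> - 1))"
        using A u yb2 by (intro mult_mono) auto
      also have "\<dots> = A * B * t + A * M * u powr (\<alpha> - 1)" by (simp add: algebra_simps)
      also have "\<dots> \<le> \<bar>A * B * t + A * M * u powr (\<alpha> - 1)\<bar>" by simp
      finally show ?thesis by simp
    qed
    thus "AE x in lborel. x \<in> {0<..<t} \<longrightarrow> norm (a x * y x) \<le> norm (A * B * t + A * M * x powr (\<alpha> - 1))"
      by (intro AE_I2) auto
  qed
qed

lemma RL_identity:
  assumes y: "cls B M y" and BM: "B \<ge> 0" "M \<ge> 0" and t: "t > 0"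
  shows "(LINT s:{0<..<t}|lborel. Fr y s / (t - s) powr \<alpha>) = Gamma \<alpha> * Gamma (1 - \<alpha>) * (LINT u:{0<..<t}|lborel. a u * y u)"
  unfolding Fr_def
proof (rule fubini_RL[OF al t])
  have yc: "continuous_on {0<..} y" using y unfolding cls_def by auto
  show "continuous_on {0<..} (\<lambda>u. a u * y u)" by (intro continuous_intros yc ac_open)
  show "set_integrable lborel {0<..<t} (\<lambda>u. a u * y u)" by (rule ay_int[OF y BM t])
qed

end



lemma div_le_self_real: "0 \<le> (x::real) \<Longrightarrow> 1 \<le> y \<Longrightarrow> x / y \<le> x"
  by (simp add: divide_le_eq mult_le_cancel_left1)

context setting begin

definition yV :: "real \<Rightarrow> (real \<Rightarrow>\<^sub>C real) \<Rightarrow> real \<Rightarrow> real" where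
  "yV b V t = b * t + t powr (\<alpha> - 1) * apply_bcontfun V (ln t)"

definition PhiF :: "real \<Rightarrow> (real \<Rightarrow>\<^sub>C real) \<Rightarrow> real \<Rightarrow> real" where
  "PhiF b V r = exp r powr (1 - \<alpha>) * ((1 / Gamma \<alpha>) * exp r * J (yV b V) (exp r))"

lemma Gpos: "Gamma \<alpha> > 0" using al by (simp add: Gamma_real_pos)

lemma cls_yV: "cls \<bar>b\<bar> (norm V) (yV b V)"
  unfolding cls_def
proof (intro conjI allI impI)
  show "continuous_on {0<..} (yV b V)" unfolding yV_def
    by (intro continuous_intros continuous_on_compose2[OF continuous_on_apply_bcontfun[of UNIV V]]) auto
  fix t :: real assume t: "t > 0"
  have "\<bar>yV b V t\<bar> \<le> \<bar>b * t\<bar> + \<bar>t powr (\<alpha> - 1) * apply_bcontfun V (ln t)\<bar>"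
    unfolding yV_def by (rule abs_triangle_ineq)
  also have "\<bar>t powr (\<alpha> - 1) * apply_bcontfun V (ln t)\<bar> \<le> t powr (\<alpha> - 1) * norm V"
    using norm_bounded[of V "ln t"] by (simp add: abs_mult mult_left_mono)
  finally show "\<bar>yV b V t\<bar> \<le> \<bar>b\<bar> * t + norm V * t powr (\<alpha> - 1)"
    using t by (simp add: abs_mult mult.commute)
qed

lemma PhiF_bound_gen:
  assumes y: "cls B M y" and BM: "B \<ge> 0" "M \<ge> 0"
  shows "\<bar>exp r powr (1 - \<alpha>) * ((1 / Gamma \<alpha>) * exp r * J y (exp r))\<bar> \<le> (1 / Gamma \<alpha>) * (B * S1 + M * chi) / (2 - \<alpha>)"
proof -
  define t where "t = exp r"
  have t: "t > 0" by (simp add: t_def)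
  have Jb: "\<bar>J y t\<bar> \<le> (B * S1 + M * chi) * t powr (\<alpha> - 2) / (2 - \<alpha>)" by (rule J_int(2)[OF y BM t])
  have e: "t powr (1 - \<alpha>) * t * t powr (\<alpha> - 2) = 1"
    using t by (simp add: powr_add[symmetric] powr_mult_base mult.assoc)
  have "\<bar>t powr (1 - \<alpha>) * ((1 / Gamma \<alpha>) * t * J y t)\<bar> = (1 / Gamma \<alpha>) * (t powr (1 - \<alpha>) * t) * \<bar>J y t\<bar>"
    using t Gpos by (simp add: abs_mult)
  also have "\<dots> \<le> (1 / Gamma \<alpha>) * (t powr (1 - \<alpha>) * t) * ((B * S1 + M * chi) * t powr (\<alpha> - 2) / (2 - \<alpha>))"
    using Jb t Gpos by (intro mult_left_mono) auto
  also have "\<dots> = (1 / Gamma \<alpha>) * (B * S1 + M * chi) / (2 - \<alpha>) * (t powr (1 - \<alpha>) * t * t powr (\<alpha> - 2))"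
    by (simp add: field_simps)
  finally show ?thesis using e by (simp add: t_def)
qed

lemma PhiF_bcontfun: "PhiF b V \<in> bcontfun"
proof (rule bcontfun_normI)
  have Jc: "continuous_on {0<..} (J (yV b V))"
    using J_deriv[OF cls_yV] by (intro continuous_at_imp_continuous_on ballI DERIV_isCont) auto
  show "continuous_on UNIV (PhiF b V)" unfolding PhiF_def
    by (intro continuous_intros continuous_on_compose2[OF Jc]) auto
  show "norm (PhiF b V r) \<le> (1 / Gamma \<alpha>) * (\<bar>b\<bar> * S1 + norm V * chi) / (2 - \<alpha>)" for r
    unfolding PhiF_def using PhiF_bound_gen[OF cls_yV] by simp
qed

definition Phi where "Phi b V = Bcontfun (PhiF b V)"

lemma Phi_apply: "apply_bcontfun (Phi b V) r = PhiF b V r"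
  unfolding Phi_def using PhiF_bcontfun by (simp add: Bcontfun_inverse)

lemma Phi_contr: "dist (Phi b V1) (Phi b V2) \<le> (chi / Gamma \<alpha>) * dist V1 V2"
proof (rule dist_bound)
  fix r :: real
  define D where "D = dist V1 V2"
  define w where "w t = yV b V1 t - yV b V2 t" for t
  have D0: "D \<ge> 0" by (simp add: D_def)
  have wc: "cls 0 D w" unfolding cls_def
  proof (intro conjI allI impI)
    show "continuous_on {0<..} w" unfolding w_def using cls_yV unfolding cls_def
      by (intro continuous_intros) auto
    fix t :: real assume t: "t > 0"
    have "w t = t powr (\<alpha> - 1) * (apply_bcontfun V1 (ln t) - apply_bcontfun V2 (ln t))"
      unfolding w_def yV_def by (simp add: algebra_simps)
    hence "\<bar>w t\<bar> = t powr (\<alpha> - 1) * \<bar>apply_bcontfun V1 (ln t) - apply_bcontfun V2 (ln t)\<bar>"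
      by (simp add: abs_mult)
    also have "\<dots> \<le> t powr (\<alpha> - 1) * D"
      using dist_bounded[of V1 "ln t" V2] by (intro mult_left_mono) (auto simp: D_def dist_real_def)
    finally show "\<bar>w t\<bar> \<le> 0 * t + D * t powr (\<alpha> - 1)" by (simp add: mult.commute)
  qed
  have "PhiF b V1 r - PhiF b V2 r = exp r powr (1 - \<alpha>) * ((1 / Gamma \<alpha>) * exp r * J w (exp r))"
    unfolding PhiF_def w_def
    by (simp add: J_diff[OF cls_yV cls_yV] algebra_simps)
  hence "\<bar>PhiF b V1 r - PhiF b V2 r\<bar> \<le> (1 / Gamma \<alpha>) * (0 * S1 + D * chi) / (2 - \<alpha>)"
    using PhiF_bound_gen[OF wc _ D0] by simp
  also have "\<dots> \<le> (chi / Gamma \<alpha>) * D"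
  proof -
    have P: "0 \<le> (1 / Gamma \<alpha>) * (D * chi)" using Gpos chi_nonneg D0 by simp
    have "(1 / Gamma \<alpha>) * (0 * S1 + D * chi) / (2 - \<alpha>) = ((1 / Gamma \<alpha>) * (D * chi)) / (2 - \<alpha>)" by simp
    also have "\<dots> \<le> (1 / Gamma \<alpha>) * (D * chi)"
      using P al by (intro div_le_self_real) auto
    finally show ?thesis by (simp add: mult.commute)
  qed
  finally show "dist (apply_bcontfun (Phi b V1) r) (apply_bcontfun (Phi b V2) r) \<le> (chi / Gamma \<alpha>) * dist V1 V2"
    by (simp add: Phi_apply dist_real_def D_def)
qed

end



theorem theorem2:
  fixes \<alpha> :: real and a :: "real \<Rightarrow> real" and c b :: real
  assumes alpha: "0 < \<alpha>" "\<alpha> < 1"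
    and a_cont: "continuous_on {0..} a"
    and int1: "set_integrable lborel {0<..} (\<lambda>t. t * \<bar>a t\<bar>)"
    and int2: "\<And>t. t > 0 \<Longrightarrow>
        set_integrable lborel {0<..<t} (\<lambda>s. s * \<bar>a s\<bar> / (t - s) powr (1 - \<alpha>))"
    and sup1: "bdd_above ((\<lambda>t. t powr (1 - \<alpha>) *
        (LINT s:{0<..<t}|lborel. s * \<bar>a s\<bar> / (t - s) powr (1 - \<alpha>))) ` {0<..})"
    and int3: "set_integrable lborel {0<..} (\<lambda>s. \<bar>a s\<bar> / s powr (1 - \<alpha>))"
    and int4: "\<And>t. t > 0 \<Longrightarrow>
        set_integrable lborel {0<..<t}
          (\<lambda>s. \<bar>a s\<bar> / ((t - s) powr (1 - \<alpha>) * s powr (1 - \<alpha>)))"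
    and sup2: "bdd_above ((\<lambda>t. t powr (1 - \<alpha>) *
        (LINT s:{0<..<t}|lborel. \<bar>a s\<bar> / ((t - s) powr (1 - \<alpha>) * s powr (1 - \<alpha>)))) ` {0<..})"
    and k3: "(1 / Gamma \<alpha>) *
        ((LINT s:{0<..}|lborel. \<bar>a s\<bar> / s powr (1 - \<alpha>)) +
         (SUP t\<in>{0<..}. t powr (1 - \<alpha>) *
            (LINT s:{0<..<t}|lborel. \<bar>a s\<bar> / ((t - s) powr (1 - \<alpha>) * s powr (1 - \<alpha>))))) < 1"
    and b_nz: "b \<noteq> 0"
  shows "\<exists>x x' :: real \<Rightarrow> real.
      (\<forall>t>0. (x has_real_derivative x' t) (at t)) \<and> continuous_on {0<..} x' \<and>
      RL_admissible \<alpha> (\<lambda>t. t * x' t - x t) \<and>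
      (\<forall>t>0. \<exists>D. has_RL_derivative_at \<alpha> (\<lambda>s. s * x' s - x s) D t \<and> D + a t * x t = 0) \<and>
      (\<exists>h :: real \<Rightarrow> real. h \<in> O[at_top](\<lambda>_. 1) \<and>
         (\<forall>\<^sub>F t in at_top. x t = (c + h t) * t powr (\<alpha> - 1) + b * t)) \<and>
      (\<lambda>t. x t - b * t) \<in> O[at_top](\<lambda>t. t powr (\<alpha> - 1))"
proof -
  interpret S: setting \<alpha> a
    by unfold_locales (use alpha a_cont int2 sup1 int4 sup2 in auto)
  define lam where "lam = 1 / Gamma \<alpha>"
  have G: "Gamma \<alpha> > 0" by (rule S.Gpos)
  have G1: "Gamma (1 - \<alpha>) > 0" using alpha by (simp add: Gamma_real_pos)
  have kc: "S.chi / Gamma \<alpha> < 1"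
  proof -
    have "0 \<le> (LINT s:{0<..}|lborel. \<bar>a s\<bar> / s powr (1 - \<alpha>))"
      by (rule set_integral_nonneg0) auto
    hence "(1 / Gamma \<alpha>) * S.chi \<le> (1 / Gamma \<alpha>) * ((LINT s:{0<..}|lborel. \<bar>a s\<bar> / s powr (1 - \<alpha>)) + S.chi)"
      using G by (intro mult_left_mono) auto
    also have "\<dots> < 1" using k3 unfolding S.chi_def S.I4_def by simp
    finally show ?thesis by simp
  qed
  have "\<exists>!V. S.Phi b V = V"
  proof (rule banach_fix_type)
    show "0 \<le> S.chi / Gamma \<alpha>" using S.chi_nonneg G by simp
    show "S.chi / Gamma \<alpha> < 1" by (rule kc)
    show "\<forall>V1 V2. dist (S.Phi b V1) (S.Phi b V2) \<le> S.chi / Gamma \<alpha> * dist V1 V2"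
      using S.Phi_contr by blast
  qed
  then obtain V where fixV: "S.Phi b V = V" by blast
  define x where "x = S.yV b V"
  have xc: "S.cls \<bar>b\<bar> (norm V) x" unfolding x_def by (rule S.cls_yV)
  have BM: "\<bar>b\<bar> \<ge> 0" "norm V \<ge> 0" by auto
  have key: "x t = b * t + lam * t * S.J x t" if t: "t > 0" for t
  proof -
    have "apply_bcontfun V (ln t) = S.PhiF b V (ln t)"
      using S.Phi_apply[of b V "ln t"] fixV by simp
    also have "\<dots> = t powr (1 - \<alpha>) * (lam * t * S.J x t)"
      using t by (simp add: S.PhiF_def lam_def x_def)
    finally have e: "apply_bcontfun V (ln t) = t powr (1 - \<alpha>) * (lam * t * S.J x t)" .
    have "t powr (\<alpha> - 1) * t powr (1 - \<alpha>) = 1" using t by (simp add: powr_add[symmetric])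
    hence "x t = b * t + (t powr (\<alpha> - 1) * t powr (1 - \<alpha>)) * (lam * t * S.J x t)"
      unfolding x_def S.yV_def e[unfolded x_def] by (simp only: mult.assoc) simp
    thus ?thesis using \<open>t powr (\<alpha> - 1) * t powr (1 - \<alpha>) = 1\<close> by simp
  qed
  define x' where "x' t = b + lam * S.J x t - lam * S.Fr x t / t" for t
  have deriv: "(x has_real_derivative x' t) (at t)" if t: "t > 0" for t
  proof -
    have "((\<lambda>s. b * s + lam * s * S.J x s) has_real_derivative x' t) (at t)"
      using t by (auto intro!: derivative_eq_intros S.J_deriv[OF xc BM t] simp: x'_def field_simps power2_eq_square)
    thus ?thesis
      by (rule has_field_derivative_transform_within_open[of _ _ _ "{0<..}"]) (use t key in auto)
  qed
  have Jc: "continuous_on {0<..} (S.J x)"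
    using S.J_deriv[OF xc BM] by (intro continuous_at_imp_continuous_on ballI DERIV_isCont) auto
  have x'c: "continuous_on {0<..} x'" unfolding x'_def
    by (intro continuous_intros Jc S.Fr_cont[OF xc BM]) auto
  have xcont: "continuous_on {0<..} x" using xc by (simp add: S.cls_def)
  have feq: "s * x' s - x s = - lam * S.Fr x s" if s: "s > 0" for s
    using s key[OF s] by (simp add: x'_def field_simps)
  have adm: "RL_admissible \<alpha> (\<lambda>t. t * x' t - x t)"
    unfolding RL_admissible_def
  proof (intro conjI exI)
    show "continuous_on {0<..} (\<lambda>t. t * x' t - x t)" by (intro continuous_intros x'c xcont)
    have "((\<lambda>t. - lam * (t powr (1 - \<alpha>) * S.Fr x t)) \<longlongrightarrow> - lam * 0) (at_right 0)"
      by (intro tendsto_intros S.Fr_lim0[OF xc BM])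
    moreover have "eventually (\<lambda>t. - lam * (t powr (1 - \<alpha>) * S.Fr x t) = t powr (1 - \<alpha>) * (t * x' t - x t)) (at_right 0)"
      using eventually_at_right_less[of 0] by eventually_elim (simp add: feq)
    ultimately show "((\<lambda>t. t powr (1 - \<alpha>) * (t * x' t - x t)) \<longlongrightarrow> 0) (at_right 0)"
      by (simp add: Lim_transform_eventually)
  qed
  have RL: "\<exists>D. has_RL_derivative_at \<alpha> (\<lambda>s. s * x' s - x s) D t \<and> D + a t * x t = 0" if t: "t > 0" for t
  proof -
    have aux: "RL_aux_int \<alpha> (\<lambda>s. s * x' s - x s) \<tau> = - Gamma (1 - \<alpha>) * (LINT u:{0<..<\<tau>}|lborel. a u * x u)"
      if tau: "\<tau> > 0" for \<tau>
    proof -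
      have "RL_aux_int \<alpha> (\<lambda>s. s * x' s - x s) \<tau> = (LINT s:{0<..<\<tau>}|lborel. - lam * (S.Fr x s / (\<tau> - s) powr \<alpha>))"
        unfolding RL_aux_int_def by (rule set_lebesgue_integral_cong) (auto simp: feq)
      also have "\<dots> = - lam * (LINT s:{0<..<\<tau>}|lborel. S.Fr x s / (\<tau> - s) powr \<alpha>)"
        by (rule set_integral_mult_right)
      also have "\<dots> = - lam * (Gamma \<alpha> * Gamma (1 - \<alpha>) * (LINT u:{0<..<\<tau>}|lborel. a u * x u))"
        by (simp add: S.RL_identity[OF xc BM tau])
      also have "\<dots> = - Gamma (1 - \<alpha>) * (LINT u:{0<..<\<tau>}|lborel. a u * x u)"
        using G by (simp add: lam_def)
      finally show ?thesis .
    qed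
    have axc: "continuous_on {0<..} (\<lambda>u. a u * x u)" by (intro continuous_intros S.ac_open xcont)
    have "((\<lambda>\<tau>. - Gamma (1 - \<alpha>) * (LINT u:{0<..<\<tau>}|lborel. a u * x u)) has_real_derivative - Gamma (1 - \<alpha>) * (a t * x t)) (at t)"
      by (intro DERIV_cmult DERIV_head[OF axc S.ay_int[OF xc BM] t])
    hence d: "(RL_aux_int \<alpha> (\<lambda>s. s * x' s - x s) has_real_derivative - Gamma (1 - \<alpha>) * (a t * x t)) (at t)"
      by (rule has_field_derivative_transform_within_open[of _ _ _ "{0<..}"]) (use t aux in auto)
    show ?thesis
      unfolding has_RL_derivative_at_def
      by (intro exI[of _ "- a t * x t"] conjI exI[of _ "- Gamma (1 - \<alpha>) * (a t * x t)"] d) (use G1 in auto)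
  qed
  define h where "h t = apply_bcontfun V (ln t) - c" for t
  have hO: "h \<in> O[at_top](\<lambda>_. 1)"
  proof (rule bigoI[where c="norm V + \<bar>c\<bar>"])
    show "\<forall>\<^sub>F t in at_top. norm (h t) \<le> (norm V + \<bar>c\<bar>) * norm (1::real)"
    proof (intro always_eventually allI)
      fix t
      have "\<bar>apply_bcontfun V (ln t) - c\<bar> \<le> \<bar>apply_bcontfun V (ln t)\<bar> + \<bar>c\<bar>" by (rule abs_triangle_ineq4)
      also have "\<bar>apply_bcontfun V (ln t)\<bar> \<le> norm V" using norm_bounded[of V "ln t"] by simp
      finally show "norm (h t) \<le> (norm V + \<bar>c\<bar>) * norm (1::real)" by (simp add: h_def)
    qed
  qed
  have hE: "\<forall>\<^sub>F t in at_top. x t = (c + h t) * t powr (\<alpha> - 1) + b * t"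
    using eventually_gt_at_top[of 0] by eventually_elim (simp add: x_def S.yV_def h_def algebra_simps)
  have xO: "(\<lambda>t. x t - b * t) \<in> O[at_top](\<lambda>t. t powr (\<alpha> - 1))"
  proof (rule bigoI[where c="norm V"])
    show "\<forall>\<^sub>F t in at_top. norm (x t - b * t) \<le> norm V * norm (t powr (\<alpha> - 1))"
      using eventually_gt_at_top[of 0]
    proof eventually_elim
      case (elim t)
      have "norm (x t - b * t) = t powr (\<alpha> - 1) * \<bar>apply_bcontfun V (ln t)\<bar>"
        by (simp add: x_def S.yV_def abs_mult)
      also have "\<dots> \<le> t powr (\<alpha> - 1) * norm V"
        using norm_bounded[of V "ln t"] by (intro mult_left_mono) auto
      finally show ?case by (simp add: mult.commute)
    qed
  qed
  show ?thesis
    by (intro exI[of _ x] exI[of _ x'] conjI allI impI deriv x'c adm RL exI[of _ h] hO hE xO)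
qed


end
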